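(* Let $W$ be a generalized contingent solution for (MOC), $(t,x)\in[0,T)\times\mathbb{R}^n$ and $y\in W(t,x)$. Assume $W$ is Lipschitz around $(t,x)$ and $y\in\mathcal{PE}(W(t,x),P)$. Then $$0\in\mathcal{E}\Big(\mathrm{cl}\Big(\bigcup_{(f,L)\in(\mathrm{FL})(x)}\big(L+D_\uparrow W((t,x,y);(1,f))\big)\Big),P\Big)+P.$$
   Context: Setting (MOC). Fix $T>0$, $I=[0,T]$, integers $n,m,p\ge1$, nonempty compact $U\subset\mathbb{R}^m$; $f:\mathbb{R}^n\times U\to\mathbb{R}^n$ and $L:\mathbb{R}^n\times U\to\mathbb{R}^p$ continuous, bounded, and Lipschitz in $x$ uniformly in $u$. $(\mathrm{FL})(x)=\mathrm{cl}\,\mathrm{co}\{(f(x,u),L(x,u)):u\in U\}$. Euclidean norms. $P\subset\mathbb{R}^p$: closed convex pointed cone containing $0$ with nonempty interior. $\mathcal{E}(S,P)=\{y\in S:(y-P)\cap S=\{y\}\}$; contingent cone $T_S(z)=\{v:\exists h_k\to0^+,\exists v_k\to v,z+h_kv_k\in S\}$; $\mathcal{PE}(S,P)=\{y\in\mathcal{E}(S,P):T_{S+P}(y)\cap(-P)=\{0\}\}$. For $W:I\times\mathbb{R}^n\rightrightarrows\mathbb{R}^p$, $W_\uparrow=W+P$; the contingent derivative $DW_\uparrow(t,x,y)$ is the set-valued map whose graph is $T_{\mathrm{gph}W_\uparrow}(t,x,y)$, its value at $(\tau,v)$ written $DW_\uparrow((t,x,y);(\tau,v))$; $D_\uparrow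 W((t,x,y);(\tau,v))=\mathcal{E}(DW_\uparrow((t,x,y);(\tau,v)),P)$. $W$ is Lipschitz around $(t,x)$ if there are $l>0$ and a neighborhood $\mathcal{O}$ with $W(z_1)\subset W(z_2)+l\|z_1-z_2\|\mathbf{B}$ for $z_1,z_2\in\mathcal{O}$. Extremal element map: for all $(t,x)$, $y\in W(t,x)$: $W(t,x)\cap(y-P)=\{y\}=W(t,x)\cap(y+P)$. Generalized contingent solution: an extremal element map $W$ with (i) for all $(t,x)\in[0,T)\times\mathbb{R}^n$, $y\in W(t,x)$, some $(\bar f,\bar L)\in(\mathrm{FL})(x)$ satisfies $-\bar L\in DW_\uparrow((t,x,y);(1,\bar f))$; (ii) for all $(t,x)\in(0,T]\times\mathbb{R}^n$, $y\in W(t,x)$, $(f,L)\in(\mathrm{FL})(x)$: $L\in DW_\uparrow((t,x,y);(-1,-f))$; (iii) $W(T,x)=\{0\}$. *)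

theory Defs
  imports "HOL-Analysis.Analysis"
begin

definition msum :: "'a::ab_group_add set \<Rightarrow> 'a set \<Rightarrow> 'a set" where
  "msum A B = {a + b | a b. a \<in> A \<and> b \<in> B}"

definition MOC_data ::
  "real \<Rightarrow> 'm::euclidean_space set \<Rightarrow> ('n::euclidean_space \<Rightarrow> 'm \<Rightarrow> 'n)
    \<Rightarrow> ('n \<Rightarrow> 'm \<Rightarrow> 'p::euclidean_space) \<Rightarrow> bool" where
  "MOC_data T U f L \<longleftrightarrow>
     T > 0 \<and> U \<noteq> {} \<and> compact U \<and>
     continuous_on (UNIV \<times> U) (\<lambda>(x, u). f x u) \<and>
     continuous_on (UNIV \<times> U) (\<lambda>(x, u). L x u) \<and>
     bounded ((\<lambda>(x, u). f x u) ` (UNIV \<times> U)) \<and>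
     bounded ((\<lambda>(x, u). L x u) ` (UNIV \<times> U)) \<and>
     (\<exists>K. \<forall>u\<in>U. \<forall>x1 x2. norm (f x1 u - f x2 u) \<le> K * norm (x1 - x2)) \<and>
     (\<exists>K. \<forall>u\<in>U. \<forall>x1 x2. norm (L x1 u - L x2 u) \<le> K * norm (x1 - x2))"

definition FL :: "'m set \<Rightarrow> ('n \<Rightarrow> 'm \<Rightarrow> 'n) \<Rightarrow> ('n \<Rightarrow> 'm \<Rightarrow> 'p)
    \<Rightarrow> 'n \<Rightarrow> ('n::real_normed_vector \<times> 'p::real_normed_vector) set" where
  "FL U f L x = closure (convex hull {(f x u, L x u) | u. u \<in> U})"

definition ordering_cone :: "'p::euclidean_space set \<Rightarrow> bool" where
  "ordering_cone P \<longleftrightarrow> closed P \<and> convex P \<and> cone P \<and> 0 \<in> P \<and>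
     P \<inter> uminus ` P = {0} \<and> interior P \<noteq> {}"

definition eff :: "'p::ab_group_add set \<Rightarrow> 'p set \<Rightarrow> 'p set" where
  "eff S P = {y \<in> S. {y - q | q. q \<in> P} \<inter> S = {y}}"

definition contingent :: "'a::real_normed_vector set \<Rightarrow> 'a \<Rightarrow> 'a set" where
  "contingent S z = {v. \<exists>h vs. (\<forall>k. h k > 0) \<and> h \<longlonglongrightarrow> 0 \<and> vs \<longlonglongrightarrow> v \<and>
                              (\<forall>k. z + h k *\<^sub>R vs k \<in> S)}"

definition prop_eff :: "'p::euclidean_space set \<Rightarrow> 'p set \<Rightarrow> 'p set" where
  "prop_eff S P = {y \<in> eff S P. contingent (msum S P) y \<inter> uminus ` P = {0}}"

definition gph_up :: "real \<Rightarrow> (real \<Rightarrow> 'n \<Rightarrow> 'p set) \<Rightarrow> 'p set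
    \<Rightarrow> (real \<times> 'n::euclidean_space \<times> 'p::euclidean_space) set" where
  "gph_up T W P = {(t, x, y) | t x y. t \<in> {0..T} \<and> y \<in> msum (W t x) P}"

definition DWup :: "real \<Rightarrow> (real \<Rightarrow> 'n::euclidean_space \<Rightarrow> 'p::euclidean_space set) \<Rightarrow> 'p set
    \<Rightarrow> real \<times> 'n \<times> 'p \<Rightarrow> real \<times> 'n \<Rightarrow> 'p set" where
  "DWup T W P z d = {w. (fst d, snd d, w) \<in> contingent (gph_up T W P) z}"

definition Dup :: "real \<Rightarrow> (real \<Rightarrow> 'n::euclidean_space \<Rightarrow> 'p::euclidean_space set) \<Rightarrow> 'p set
    \<Rightarrow> real \<times> 'n \<times> 'p \<Rightarrow> real \<times> 'n \<Rightarrow> 'p set" where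
  "Dup T W P z d = eff (DWup T W P z d) P"

definition lipschitz_around :: "real \<Rightarrow> (real \<Rightarrow> 'n::euclidean_space \<Rightarrow> 'p::euclidean_space set)
    \<Rightarrow> real \<times> 'n \<Rightarrow> bool" where
  "lipschitz_around T W z0 \<longleftrightarrow>
     (\<exists>l>0. \<exists>N. open N \<and> z0 \<in> N \<and>
        (\<forall>z1\<in>N \<inter> ({0..T} \<times> UNIV). \<forall>z2\<in>N \<inter> ({0..T} \<times> UNIV).
           W (fst z1) (snd z1) \<subseteq> msum (W (fst z2) (snd z2)) (cball 0 (l * norm (z1 - z2)))))"

definition extremal_map :: "real \<Rightarrow> (real \<Rightarrow> 'n \<Rightarrow> 'p::ab_group_add set) \<Rightarrow> 'p set \<Rightarrow> bool" where
  "extremal_map T W P \<longleftrightarrow>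
     (\<forall>t\<in>{0..T}. \<forall>x. \<forall>y\<in>W t x.
        W t x \<inter> {y - q | q. q \<in> P} = {y} \<and> W t x \<inter> {y + q | q. q \<in> P} = {y})"

definition gen_contingent_solution ::
  "real \<Rightarrow> 'm::euclidean_space set \<Rightarrow> ('n::euclidean_space \<Rightarrow> 'm \<Rightarrow> 'n)
    \<Rightarrow> ('n \<Rightarrow> 'm \<Rightarrow> 'p::euclidean_space) \<Rightarrow> 'p set \<Rightarrow> (real \<Rightarrow> 'n \<Rightarrow> 'p set) \<Rightarrow> bool" where
  "gen_contingent_solution T U f L P W \<longleftrightarrow>
     extremal_map T W P \<and>
     (\<forall>t\<in>{0..<T}. \<forall>x. \<forall>y\<in>W t x. \<exists>(fb, Lb)\<in>FL U f L x.
         - Lb \<in> DWup T W P (t, x, y) (1, fb)) \<and>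
     (\<forall>t\<in>{0<..T}. \<forall>x. \<forall>y\<in>W t x. \<forall>(fv, Lv)\<in>FL U f L x.
         Lv \<in> DWup T W P (t, x, y) (-1, - fv)) \<and>
     (\<forall>x. W T x = {0})"

end

theory Submission
  imports Defs
begin


lemma contingent_scale:
  assumes "v \<in> contingent S z" "c > 0"
  shows "c *\<^sub>R v \<in> contingent S z"
proof -
  obtain h vs where h: "\<forall>k. h k > 0" "h \<longlonglongrightarrow> 0" "vs \<longlonglongrightarrow> v" "\<forall>k. z + h k *\<^sub>R vs k \<in> S"
    using assms(1) unfolding contingent_def by blast
  have "(\<lambda>k. h k / c) \<longlonglongrightarrow> 0 / c" using assms(2) by (auto intro!: tendsto_intros h)
  moreover have "(\<lambda>k. c *\<^sub>R vs k) \<longlonglongrightarrow> c *\<^sub>R v" by (intro tendsto_intros h)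
  moreover have "\<forall>k. z + (h k / c) *\<^sub>R (c *\<^sub>R vs k) \<in> S" using h(4) assms(2) by simp
  moreover have "\<forall>k. h k / c > 0" using h(1) assms(2) by simp
  ultimately show ?thesis unfolding contingent_def by (intro CollectI exI[of _ "\<lambda>k. h k / c"] exI[of _ "\<lambda>k. c *\<^sub>R vs k"]) simp
qed

lemma contingent_closed:
  fixes S :: "'a::real_normed_vector set"
  shows "closed (contingent S z)"
  unfolding closed_sequential_limits
proof (intro allI impI, elim conjE)
  fix vv :: "nat \<Rightarrow> 'a" and v
  assume mem: "\<forall>n. vv n \<in> contingent S z" and lim: "vv \<longlonglongrightarrow> v"
  have "\<exists>hh u. hh > 0 \<and> hh < inverse (real (Suc j)) \<and> norm (u - vv j) < inverse (real (Suc j)) \<and> z + hh *\<^sub>R u \<in> S" for j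
  proof -
    obtain h vs where h: "\<forall>k. h k > 0" "h \<longlonglongrightarrow> 0" "vs \<longlonglongrightarrow> vv j" "\<forall>k. z + h k *\<^sub>R vs k \<in> S"
      using mem unfolding contingent_def by blast
    have e: "inverse (real (Suc j)) > 0" by simp
    have "eventually (\<lambda>k. dist (h k) 0 < inverse (real (Suc j))) sequentially"
      using h(2) e tendstoD by blast
    moreover have "eventually (\<lambda>k. dist (vs k) (vv j) < inverse (real (Suc j))) sequentially"
      using h(3) e tendstoD by blast
    ultimately have "eventually (\<lambda>k. dist (h k) 0 < inverse (real (Suc j)) \<and> dist (vs k) (vv j) < inverse (real (Suc j))) sequentially"
      by (rule eventually_conj)
    then obtain k where "dist (h k) 0 < inverse (real (Suc j))" "dist (vs k) (vv j) < inverse (real (Suc j))"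
      unfolding eventually_sequentially by blast
    then show ?thesis using h(1,4) by (intro exI[of _ "h k"] exI[of _ "vs k"]) (auto simp: dist_norm)
  qed
  then obtain hh u where hu: "\<And>j. hh j > 0 \<and> hh j < inverse (real (Suc j)) \<and> norm (u j - vv j) < inverse (real (Suc j)) \<and> z + hh j *\<^sub>R u j \<in> S"
    by metis
  have "\<forall>j. norm (hh j) \<le> inverse (real (Suc j))"
  proof
    fix j
    from hu[of j] have "0 < hh j" "hh j < inverse (real (Suc j))" by auto
    then show "norm (hh j) \<le> inverse (real (Suc j))" by simp
  qed
  then have "hh \<longlonglongrightarrow> 0"
    by (intro Lim_null_comparison[OF _ LIMSEQ_inverse_real_of_nat] always_eventually)
  moreover have "\<forall>j. norm (u j - vv j) \<le> inverse (real (Suc j))" using hu less_imp_le by blast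
  then have "(\<lambda>j. u j - vv j) \<longlonglongrightarrow> 0"
    by (intro Lim_null_comparison[OF _ LIMSEQ_inverse_real_of_nat] always_eventually)
  then have "(\<lambda>j. (u j - vv j) + vv j) \<longlonglongrightarrow> 0 + v" by (intro tendsto_intros lim)
  ultimately show "v \<in> contingent S z" unfolding contingent_def using hu by (auto intro!: exI[of _ hh] exI[of _ u])
qed

lemma lip_incl:
  fixes W :: "real \<Rightarrow> 'n::euclidean_space \<Rightarrow> 'p::euclidean_space set"
  assumes l: "l > 0" and N: "open N" "(t,x) \<in> N"
    and lip: "\<forall>z1\<in>N \<inter> ({0..T} \<times> UNIV). \<forall>z2\<in>N \<inter> ({0..T} \<times> UNIV).
           W (fst z1) (snd z1) \<subseteq> msum (W (fst z2) (snd z2)) (cball 0 (l * norm (z1 - z2)))"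
    and t: "t \<in> {0..T}"
    and w: "w \<in> DWup T W P (t,x,y) (\<tau>,v)"
  shows "\<exists>k \<in> contingent (msum (W t x) P) y. norm (w - k) \<le> l * norm (\<tau>,v)"
proof -
  obtain h vs where h: "\<forall>k. h k > 0" "h \<longlonglongrightarrow> 0" "vs \<longlonglongrightarrow> (\<tau>,v,w)"
      "\<forall>k. (t,x,y) + h k *\<^sub>R vs k \<in> gph_up T W P"
    using w unfolding DWup_def contingent_def by auto
  define g where "g k = (fst (vs k), fst (snd (vs k)))" for k
  define c where "c k = snd (snd (vs k))" for k
  have g: "g \<longlonglongrightarrow> (\<tau>, v)" unfolding g_def
    using tendsto_fst[OF h(3)] tendsto_fst[OF tendsto_snd[OF h(3)]] by (auto intro!: tendsto_Pair)
  have c: "c \<longlonglongrightarrow> w" unfolding c_def using tendsto_snd[OF tendsto_snd[OF h(3)]] by simp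
  have mem: "t + h k * fst (g k) \<in> {0..T} \<and> y + h k *\<^sub>R c k \<in> msum (W (t + h k * fst (g k)) (x + h k *\<^sub>R snd (g k))) P" for k
    using h(4)[rule_format, of k] unfolding gph_up_def g_def c_def
    by (cases "vs k") auto
  have "(\<lambda>k. (t,x) + h k *\<^sub>R g k) \<longlonglongrightarrow> (t,x) + 0 *\<^sub>R (\<tau>,v)"
    by (intro tendsto_intros h g)
  then have "eventually (\<lambda>k. (t,x) + h k *\<^sub>R g k \<in> N) sequentially"
    using N by (simp add: topological_tendstoD)
  then obtain N0 where N0: "\<And>k. k \<ge> N0 \<Longrightarrow> (t,x) + h k *\<^sub>R g k \<in> N"
    unfolding eventually_sequentially by blast
  have "\<exists>d. norm d \<le> l * norm (g k) \<and> y + h k *\<^sub>R (c k - d) \<in> msum (W t x) P" if "k \<ge> N0" for k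
  proof -
    let ?z1 = "(t,x) + h k *\<^sub>R g k"
    have z1: "?z1 \<in> N \<inter> ({0..T} \<times> UNIV)" using N0[OF that] mem[of k] by (cases "g k") auto
    have z2: "(t,x) \<in> N \<inter> ({0..T} \<times> UNIV)" using N t by auto
    have "W (fst ?z1) (snd ?z1) \<subseteq> msum (W t x) (cball 0 (l * norm (?z1 - (t,x))))"
      using lip[rule_format, OF z1 z2] unfolding fst_conv snd_conv .
    moreover have "norm (?z1 - (t,x)) = h k * norm (g k)" using h(1)[rule_format, of k] by (simp add: abs_of_pos)
    moreover have "fst ?z1 = t + h k * fst (g k)" "snd ?z1 = x + h k *\<^sub>R snd (g k)" by (cases "g k"; simp)+
    ultimately have sub: "W (t + h k * fst (g k)) (x + h k *\<^sub>R snd (g k)) \<subseteq> msum (W t x) (cball 0 (l * (h k * norm (g k))))"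
      by (simp only:)
    obtain a p where ap: "a \<in> W (t + h k * fst (g k)) (x + h k *\<^sub>R snd (g k))" "p \<in> P" "y + h k *\<^sub>R c k = a + p"
      using mem[of k] unfolding msum_def by blast
    obtain b e where be: "b \<in> W t x" "e \<in> cball 0 (l * (h k * norm (g k)))" "a = b + e"
      using sub ap(1) unfolding msum_def by blast
    have hk: "h k > 0" using h(1) by auto
    define d where "d = (1 / h k) *\<^sub>R e"
    have "norm d = norm e / h k" using hk by (simp add: d_def)
    also have "\<dots> \<le> l * norm (g k)" using be(2) hk by (simp add: divide_le_eq mult.commute mult.left_commute)
    finally have nd: "norm d \<le> l * norm (g k)" .
    have "y + h k *\<^sub>R (c k - d) = y + h k *\<^sub>R c k - e" using hk by (simp add: d_def algebra_simps)
    also have "\<dots> = b + p" using ap(3) be(3) by simp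
    finally have "y + h k *\<^sub>R (c k - d) \<in> msum (W t x) P" using be(1) ap(2) unfolding msum_def by blast
    then show ?thesis using nd by blast
  qed
  then obtain dd where dd: "\<And>k. k \<ge> N0 \<Longrightarrow> norm (dd k) \<le> l * norm (g k) \<and> y + h k *\<^sub>R (c k - dd k) \<in> msum (W t x) P"
    by metis
  have gb: "bounded (range g)" using g by (simp add: convergent_imp_bounded)
  then obtain B where B: "\<And>k. norm (g k) \<le> B" unfolding bounded_iff by auto
  have "bounded (range (\<lambda>k. dd (k + N0)))"
    unfolding bounded_iff
  proof (intro exI ballI)
    fix u assume "u \<in> range (\<lambda>k. dd (k + N0))"
    then obtain k where "u = dd (k + N0)" by auto
    then show "norm u \<le> l * B" using dd[of "k+N0"] B[of "k+N0"] l
      by (meson le_add2 mult_left_mono order_trans less_imp_le)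
  qed
  then obtain d r where r: "strict_mono r" "((\<lambda>k. dd (k + N0)) \<circ> r) \<longlonglongrightarrow> d"
    using bounded_imp_convergent_subsequence by blast
  define s where "s k = r k + N0" for k
  have s: "strict_mono s" using r(1) unfolding s_def strict_mono_def by auto
  have ds: "(\<lambda>k. dd (s k)) \<longlonglongrightarrow> d" using r(2) by (simp add: s_def o_def)
  have gs: "(\<lambda>k. g (s k)) \<longlonglongrightarrow> (\<tau>,v)" using LIMSEQ_subseq_LIMSEQ[OF g s] by (simp add: o_def)
  have cs: "(\<lambda>k. c (s k)) \<longlonglongrightarrow> w" using LIMSEQ_subseq_LIMSEQ[OF c s] by (simp add: o_def)
  have hs: "(\<lambda>k. h (s k)) \<longlonglongrightarrow> 0" using LIMSEQ_subseq_LIMSEQ[OF h(2) s] by (simp add: o_def)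
  have sN: "s k \<ge> N0" for k by (simp add: s_def)
  have "norm d \<le> l * norm (\<tau>,v)"
  proof (rule tendsto_le[OF _ _ tendsto_norm[OF ds]])
    show "((\<lambda>k. l * norm (g (s k))) \<longlongrightarrow> l * norm (\<tau>,v)) sequentially" by (intro tendsto_intros gs)
    show "eventually (\<lambda>k. norm (dd (s k)) \<le> l * norm (g (s k))) sequentially"
      using dd sN by (auto intro: always_eventually)
  qed simp
  moreover have "w - d \<in> contingent (msum (W t x) P) y"
    unfolding contingent_def
  proof (intro CollectI exI conjI)
    show "\<forall>k. h (s k) > 0" using h(1) by auto
    show "(\<lambda>k. h (s k)) \<longlonglongrightarrow> 0" by (rule hs)
    show "(\<lambda>k. c (s k) - dd (s k)) \<longlonglongrightarrow> w - d" by (intro tendsto_intros cs ds)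
    show "\<forall>k. y + h (s k) *\<^sub>R (c (s k) - dd (s k)) \<in> msum (W t x) P" using dd sN by auto
  qed
  ultimately show ?thesis by (intro bexI[of _ "w - d"]) auto
qed



lemma norm_bounded_lemma:
  fixes K P :: "'p::euclidean_space set"
  assumes Kc: "closed K" and Ks: "\<And>u c. u \<in> K \<Longrightarrow> c > 0 \<Longrightarrow> c *\<^sub>R u \<in> K"
    and Pc: "closed P" and Ps: "\<And>u c. u \<in> P \<Longrightarrow> c > 0 \<Longrightarrow> c *\<^sub>R u \<in> P"
    and KP: "\<And>u. u \<in> K \<Longrightarrow> -u \<in> P \<Longrightarrow> u = 0"
  shows "bounded {m. \<exists>k\<in>K. \<exists>p\<in>P. norm (m - k) \<le> r \<and> norm (m + p) \<le> s}"
proof (rule ccontr)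
  let ?Q = "{m. \<exists>k\<in>K. \<exists>p\<in>P. norm (m - k) \<le> r \<and> norm (m + p) \<le> s}"
  assume "\<not> bounded ?Q"
  note nb = this
  have "\<exists>m\<in>?Q. norm m > real j + 1" for j
  proof (rule ccontr)
    assume "\<not> (\<exists>m\<in>?Q. norm m > real j + 1)"
    then have "\<forall>m\<in>?Q. norm m \<le> real j + 1" by (meson not_less)
    then have "bounded ?Q" unfolding bounded_iff by (rule exI)
    with nb show False by (rule notE)
  qed
  then have "\<forall>j. \<exists>m. m \<in> ?Q \<and> norm m > real j + 1" by blast
  from choice[OF this] obtain m where m: "\<And>j. m j \<in> ?Q \<and> norm (m j) > real j + 1" by blast
  have "\<forall>j. \<exists>kp. fst kp \<in> K \<and> snd kp \<in> P \<and> norm (m j - fst kp) \<le> r \<and> norm (m j + snd kp) \<le> s"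
  proof
    fix j
    from m[of j] obtain k p where "k \<in> K" "p \<in> P" "norm (m j - k) \<le> r" "norm (m j + p) \<le> s" by blast
    then show "\<exists>kp. fst kp \<in> K \<and> snd kp \<in> P \<and> norm (m j - fst kp) \<le> r \<and> norm (m j + snd kp) \<le> s"
      by (intro exI[of _ "(k,p)"]) simp
  qed
  from choice[OF this] obtain kp where kp0: "\<And>j. fst (kp j) \<in> K \<and> snd (kp j) \<in> P \<and> norm (m j - fst (kp j)) \<le> r \<and> norm (m j + snd (kp j)) \<le> s"
    by blast
  define k where "k j = fst (kp j)" for j
  define p where "p j = snd (kp j)" for j
  have kp: "\<And>j. k j \<in> K \<and> p j \<in> P \<and> norm (m j - k j) \<le> r \<and> norm (m j + p j) \<le> s"
    using kp0 unfolding k_def p_def by blast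
  define n where "n j = norm (m j)" for j
  have npos: "n j > 0" for j using m[of j] unfolding n_def by (smt (verit) of_nat_0_le_iff)
  have "bounded (range (\<lambda>j. (1 / n j) *\<^sub>R m j))"
    unfolding bounded_iff using npos by (auto simp: n_def)
  then obtain u q where q: "strict_mono q" "((\<lambda>j. (1 / n j) *\<^sub>R m j) \<circ> q) \<longlonglongrightarrow> u"
    using bounded_imp_convergent_subsequence by blast
  have uq: "(\<lambda>j. (1 / n (q j)) *\<^sub>R m (q j)) \<longlonglongrightarrow> u" using q(2) by (simp add: o_def)
  have inv: "1 / n (q j) \<le> inverse (real (Suc j))" for j
  proof -
    have "real j \<le> real (q j)" using seq_suble[OF q(1)] by simp
    then have "real (Suc j) \<le> n (q j)" using m[of "q j"] unfolding n_def by simp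
    then show ?thesis using npos by (simp add: divide_simps)
  qed
  have nu: "norm u = 1"
  proof -
    have "(\<lambda>j. norm ((1 / n (q j)) *\<^sub>R m (q j))) \<longlonglongrightarrow> norm u" by (intro tendsto_intros uq)
    moreover have e1: "norm ((1 / n (q j)) *\<^sub>R m (q j)) = 1" for j using npos[of "q j"] by (simp add: n_def)
    moreover have "(\<lambda>j. norm ((1 / n (q j)) *\<^sub>R m (q j))) = (\<lambda>j. 1::real)" using e1 by (rule ext)
    ultimately have "(\<lambda>j::nat. 1::real) \<longlonglongrightarrow> norm u" by (simp only:)
    then show ?thesis using LIMSEQ_unique[OF tendsto_const] by metis
  qed
  have z1: "(\<lambda>j. (1 / n (q j)) *\<^sub>R (m (q j) - k (q j))) \<longlonglongrightarrow> 0"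
  proof (rule Lim_null_comparison)
    show "((\<lambda>j. \<bar>r\<bar> * inverse (real (Suc j))) \<longlongrightarrow> 0) sequentially"
      using tendsto_mult[OF tendsto_const LIMSEQ_inverse_real_of_nat, of "\<bar>r\<bar>"] by simp
    show "eventually (\<lambda>j. norm ((1 / n (q j)) *\<^sub>R (m (q j) - k (q j))) \<le> \<bar>r\<bar> * inverse (real (Suc j))) sequentially"
    proof (rule always_eventually, rule allI)
      fix j
      have "norm ((1 / n (q j)) *\<^sub>R (m (q j) - k (q j))) = (1 / n (q j)) * norm (m (q j) - k (q j))"
        using npos[of "q j"] by simp
      also have "\<dots> \<le> inverse (real (Suc j)) * \<bar>r\<bar>"
        using kp[of "q j"] inv[of j] npos[of "q j"] by (intro mult_mono) auto
      finally show "norm ((1 / n (q j)) *\<^sub>R (m (q j) - k (q j))) \<le> \<bar>r\<bar> * inverse (real (Suc j))" by (simp add: mult.commute)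
    qed
  qed
  have z2: "(\<lambda>j. (1 / n (q j)) *\<^sub>R (m (q j) + p (q j))) \<longlonglongrightarrow> 0"
  proof (rule Lim_null_comparison)
    show "((\<lambda>j. \<bar>s\<bar> * inverse (real (Suc j))) \<longlongrightarrow> 0) sequentially"
      using tendsto_mult[OF tendsto_const LIMSEQ_inverse_real_of_nat, of "\<bar>s\<bar>"] by simp
    show "eventually (\<lambda>j. norm ((1 / n (q j)) *\<^sub>R (m (q j) + p (q j))) \<le> \<bar>s\<bar> * inverse (real (Suc j))) sequentially"
    proof (rule always_eventually, rule allI)
      fix j
      have "norm ((1 / n (q j)) *\<^sub>R (m (q j) + p (q j))) = (1 / n (q j)) * norm (m (q j) + p (q j))"
        using npos[of "q j"] by simp
      also have "\<dots> \<le> inverse (real (Suc j)) * \<bar>s\<bar>"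
        using kp[of "q j"] inv[of j] npos[of "q j"] by (intro mult_mono) auto
      finally show "norm ((1 / n (q j)) *\<^sub>R (m (q j) + p (q j))) \<le> \<bar>s\<bar> * inverse (real (Suc j))" by (simp add: mult.commute)
    qed
  qed
  have "(\<lambda>j. (1 / n (q j)) *\<^sub>R m (q j) - (1 / n (q j)) *\<^sub>R (m (q j) - k (q j))) \<longlonglongrightarrow> u - 0"
    by (intro tendsto_intros uq z1)
  then have kl: "(\<lambda>j. (1 / n (q j)) *\<^sub>R k (q j)) \<longlonglongrightarrow> u" by (simp add: algebra_simps)
  have "(\<lambda>j. (1 / n (q j)) *\<^sub>R (m (q j) + p (q j)) - (1 / n (q j)) *\<^sub>R m (q j)) \<longlonglongrightarrow> 0 - u"
    by (intro tendsto_intros uq z2)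
  then have pl: "(\<lambda>j. (1 / n (q j)) *\<^sub>R p (q j)) \<longlonglongrightarrow> - u" by (simp add: algebra_simps)
  have "\<forall>j. (1 / n (q j)) *\<^sub>R k (q j) \<in> K" using Ks kp npos by simp
  then have "u \<in> K" using Kc[unfolded closed_sequential_limits, rule_format, OF conjI[OF _ kl]] by blast
  moreover have "\<forall>j. (1 / n (q j)) *\<^sub>R p (q j) \<in> P" using Ps kp npos by simp
  then have "- u \<in> P" using Pc[unfolded closed_sequential_limits, rule_format, OF conjI[OF _ pl]] by blast
  ultimately have "u = 0" by (rule KP)
  then show False using nu by simp
qed

lemma cone_sum_mem:
  assumes P: "convex P" "cone P" "0 \<in> P" and "finite A"
  shows "(\<forall>a\<in>A. g a \<in> P) \<longrightarrow> sum g A \<in> P"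
  using \<open>finite A\<close>
proof (induction A rule: finite_induct)
  case empty then show ?case using P by simp
next
  case (insert a A)
  have "convex_cone P" using P convex_cone_iff convex_cone_def cone_def
    by (metis conic_def empty_iff)
  then show ?case using insert by (auto intro: convex_cone_add)
qed

lemma dual_functional:
  fixes P :: "'p::euclidean_space set"
  assumes "ordering_cone P"
  shows "\<exists>a. \<forall>q\<in>P. q \<noteq> 0 \<longrightarrow> inner a q > 0"
proof -
  have Pc: "closed P" "convex P" "cone P" "0 \<in> P" "P \<inter> uminus ` P = {0}"
    using assms unfolding ordering_cone_def by auto
  have Pcc: "convex_cone P" using Pc convex_cone_iff convex_cone_def cone_def
    by (metis conic_def empty_iff)
  define Sp where "Sp = P \<inter> sphere 0 1"
  have cSp: "compact Sp" unfolding Sp_def using Pc(1) by (simp add: compact_Int_closed closed_Int_compact)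
  define H where "H = convex hull Sp"
  have cH: "compact H" unfolding H_def using cSp by (rule compact_convex_hull)
  have "0 \<notin> H"
  proof
    assume "0 \<in> H"
    then obtain A u where A: "finite A" "A \<subseteq> Sp" "\<forall>x\<in>A. 0 \<le> u x" "sum u A = 1" "(\<Sum>v\<in>A. u v *\<^sub>R v) = 0"
      unfolding H_def convex_hull_explicit by blast
    obtain v0 where v0: "v0 \<in> A" "u v0 > 0"
      using A(3,4) by (metis less_eq_real_def sum_nonpos zero_less_one not_le)
    have sA: "(\<Sum>v\<in>A. u v *\<^sub>R v) = u v0 *\<^sub>R v0 + (\<Sum>v\<in>A - {v0}. u v *\<^sub>R v)"
      using A(1) v0(1) by (simp add: sum.remove)
    have "(\<Sum>v\<in>A - {v0}. u v *\<^sub>R v) \<in> P"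
      using cone_sum_mem[OF Pc(2,3,4), of "A - {v0}" "\<lambda>v. u v *\<^sub>R v"] A Sp_def
      by (meson Pcc IntE convex_cone_scaleR finite_Diff in_mono DiffD1)
    moreover have u0P: "u v0 *\<^sub>R v0 \<in> P" using v0 A(2) Sp_def Pcc convex_cone_scaleR by (metis IntE in_mono less_imp_le)
    moreover have "u v0 *\<^sub>R v0 = - (\<Sum>v\<in>A - {v0}. u v *\<^sub>R v)" using sA A(5) by (simp add: eq_neg_iff_add_eq_0)
    ultimately have "u v0 *\<^sub>R v0 \<in> P \<inter> uminus ` P" by auto
    then have "u v0 *\<^sub>R v0 = 0" using Pc(5) by auto
    then have "v0 = 0" using v0(2) by simp
    then show False using v0(1) A(2) unfolding Sp_def by auto
  qed
  then obtain a b where ab: "a \<noteq> 0" "0 < b" "\<forall>x\<in>H. inner a x > b"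
    using separating_hyperplane_closed_0[of H] cH unfolding H_def
    by (metis compact_imp_closed convex_convex_hull)
  have "inner a q > 0" if "q \<in> P" "q \<noteq> 0" for q
  proof -
    have "(1 / norm q) *\<^sub>R q \<in> Sp" unfolding Sp_def using that Pc(3) by (auto simp: cone_def)
    moreover have "Sp \<subseteq> H" unfolding H_def by (rule hull_subset)
    ultimately have "inner a ((1 / norm q) *\<^sub>R q) > b" using ab(3) by blast
    moreover have "inner a ((1 / norm q) *\<^sub>R q) = inner a q / norm q" by simp
    ultimately have "inner a q / norm q > 0" using ab(2) by linarith
    moreover have "norm q > 0" using that by simp
    ultimately have "0 < inner a q / norm q * norm q" by (intro mult_pos_pos)
    then show ?thesis using \<open>norm q > 0\<close> by simp
  qed
  then show ?thesis by (intro exI[of _ a] ballI impI)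
qed

lemma minimal_exists:
  fixes C P :: "'p::euclidean_space set"
  assumes "ordering_cone P" "compact C" "C \<noteq> {}"
  shows "\<exists>e\<in>C. \<forall>q\<in>P. e - q \<in> C \<longrightarrow> q = 0"
proof -
  obtain a where a: "\<forall>q\<in>P. q \<noteq> 0 \<longrightarrow> inner a q > 0" using dual_functional[OF assms(1)] by blast
  obtain e where e: "e \<in> C" "\<forall>y\<in>C. inner a e \<le> inner a y"
  proof -
    have "continuous_on C (\<lambda>y. inner a y)" by (intro continuous_intros)
    then show ?thesis using continuous_attains_inf[OF assms(2,3), of "\<lambda>y. inner a y"] that by blast
  qed
  have "q = 0" if "q \<in> P" "e - q \<in> C" for q
    using e(2)[rule_format, OF that(2)] a that(1) by (auto simp: inner_diff_right)
  then show ?thesis using e(1) by blast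
qed

lemma effI:
  assumes "y \<in> S" "0 \<in> P" "\<And>q. q \<in> P \<Longrightarrow> y - q \<in> S \<Longrightarrow> q = 0"
  shows "y \<in> eff S P"
  unfolding eff_def using assms by (auto intro!: exI[of _ 0])



theorem proposition6p3:
  fixes T :: real and U :: "'m::euclidean_space set"
    and f :: "'n::euclidean_space \<Rightarrow> 'm \<Rightarrow> 'n" and L :: "'n \<Rightarrow> 'm \<Rightarrow> 'p::euclidean_space"
    and P :: "'p set" and W :: "real \<Rightarrow> 'n \<Rightarrow> 'p set"
    and t :: real and x :: 'n and y :: 'p
  assumes "MOC_data T U f L"
    and "ordering_cone P"
    and "gen_contingent_solution T U f L P W"
    and "t \<in> {0..<T}"
    and "y \<in> W t x"
    and "lipschitz_around T W (t, x)"
    and "y \<in> prop_eff (W t x) P"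
  shows "0 \<in> msum (eff (closure (\<Union>(fv, Lv)\<in>FL U f L x.
                         (\<lambda>d. Lv + d) ` Dup T W P (t, x, y) (1, fv))) P) P"
proof -
  have Pc: "closed P" "convex P" "cone P" "0 \<in> P" "P \<inter> uminus ` P = {0}"
    using assms(2) unfolding ordering_cone_def by auto
  have Pcc: "convex_cone P" using Pc convex_cone_iff convex_cone_def cone_def
    by (metis conic_def empty_iff)
  have Padd: "\<And>a b. a \<in> P \<Longrightarrow> b \<in> P \<Longrightarrow> a + b \<in> P" using Pcc by (rule convex_cone_add)
  have Ps: "\<And>u c. u \<in> P \<Longrightarrow> c > 0 \<Longrightarrow> c *\<^sub>R u \<in> P" using Pc(3) unfolding cone_def by simp
  obtain l N where l: "l > 0" "open N" "(t,x) \<in> N"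
    and lip: "\<forall>z1\<in>N \<inter> ({0..T} \<times> UNIV). \<forall>z2\<in>N \<inter> ({0..T} \<times> UNIV).
           W (fst z1) (snd z1) \<subseteq> msum (W (fst z2) (snd z2)) (cball 0 (l * norm (z1 - z2)))"
    using assms(6) unfolding lipschitz_around_def by blast
  define K where "K = contingent (msum (W t x) P) y"
  have KP: "u = 0" if "u \<in> K" "- u \<in> P" for u
  proof -
    have "u \<in> uminus ` P" using that(2) by (metis image_eqI minus_minus)
    then show ?thesis using that(1) assms(7) unfolding prop_eff_def K_def by blast
  qed
  have Kc: "closed K" unfolding K_def by (rule contingent_closed)
  have Ks: "\<And>u c. u \<in> K \<Longrightarrow> c > 0 \<Longrightarrow> c *\<^sub>R u \<in> K" unfolding K_def by (rule contingent_scale)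
  have t0: "t \<in> {0..T}" using assms(4) by auto
  have incl: "\<exists>k\<in>K. norm (w - k) \<le> l * norm (1::real, fv)" if "w \<in> DWup T W P (t,x,y) (1,fv)" for fv w
    unfolding K_def by (rule lip_incl[OF l lip t0 that])
  have MOC: "bounded ((\<lambda>(x, u). f x u) ` (UNIV \<times> U))" "bounded ((\<lambda>(x, u). L x u) ` (UNIV \<times> U))"
    using assms(1) unfolding MOC_data_def by auto
  have "{(f x u, L x u) | u. u \<in> U} \<subseteq> ((\<lambda>(x, u). f x u) ` (UNIV \<times> U)) \<times> ((\<lambda>(x, u). L x u) ` (UNIV \<times> U))"
    by force
  then have "bounded {(f x u, L x u) | u. u \<in> U}" using bounded_Times[OF MOC] bounded_subset by blast
  then have "bounded (FL U f L x)" unfolding FL_def by (intro bounded_closure bounded_convex_hull)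
  then obtain B where B: "B > 0" "\<And>z. z \<in> FL U f L x \<Longrightarrow> norm z \<le> B" unfolding bounded_pos by blast
  have fvB: "norm fv \<le> B" "norm Lv \<le> B" if "(fv, Lv) \<in> FL U f L x" for fv Lv
    using B(2)[OF that] norm_fst_le[of fv Lv] norm_snd_le[of Lv fv] by linarith+
  define r where "r = B + l * (1 + B)"
  have incl1: "\<exists>k\<in>K. norm (w - k) \<le> r" if H: "(fv, Lv) \<in> FL U f L x" "w \<in> DWup T W P (t,x,y) (1,fv)" for fv Lv w
  proof -
    obtain k where k: "k \<in> K" "norm (w - k) \<le> l * norm (1::real, fv)" using incl[OF H(2)] by blast
    have "norm (1::real, fv) \<le> 1 + B" using norm_Pair_le[of "1::real" fv] fvB[OF H(1)] by simp
    then have "l * norm (1::real, fv) \<le> l * (1 + B)" using l(1) by (intro mult_left_mono) auto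
    then have "norm (w - k) \<le> r" using k(2) B(1) unfolding r_def by linarith
    then show ?thesis using k(1) by blast
  qed
  have incl2: "\<exists>k\<in>K. norm (Lv + w - k) \<le> r + B" if H: "(fv, Lv) \<in> FL U f L x" "w \<in> DWup T W P (t,x,y) (1,fv)" for fv Lv w
  proof -
    obtain k where k: "k \<in> K" "norm (w - k) \<le> r" using incl1[OF H] by blast
    have "norm (Lv + w - k) \<le> norm Lv + norm (w - k)"
      by (metis add_diff_eq norm_triangle_ineq)
    then have "norm (Lv + w - k) \<le> r + B" using k(2) fvB[OF H(1)] by linarith
    then show ?thesis using k(1) by blast
  qed
  define Q where "Q s = {m. \<exists>k\<in>K. \<exists>p\<in>P. norm (m - k) \<le> r + B \<and> norm (m + p) \<le> s}" for s
  have Qb: "bounded (Q s)" for s unfolding Q_def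
    by (rule norm_bounded_lemma[OF Kc Ks Pc(1) Ps KP])
  define US where "US = (\<Union>(fv, Lv)\<in>FL U f L x. (\<lambda>d. Lv + d) ` Dup T W P (t, x, y) (1, fv))"
  define S where "S = closure US"
  have USK: "\<exists>k\<in>K. norm (u - k) \<le> r + B" if uU: "u \<in> US" for u
  proof -
    obtain fv Lv d where "(fv, Lv) \<in> FL U f L x" "d \<in> Dup T W P (t, x, y) (1, fv)" "u = Lv + d"
      using uU unfolding US_def by blast
    moreover then have "d \<in> DWup T W P (t, x, y) (1, fv)" unfolding Dup_def eff_def by blast
    ultimately show ?thesis using incl2 by blast
  qed
  define C where "C = S \<inter> uminus ` P"
  have Ccl: "closed C" unfolding C_def S_def using closed_negations[OF Pc(1)] by auto
  obtain BQ where BQ: "\<And>m. m \<in> Q 1 \<Longrightarrow> norm m \<le> BQ" using Qb[of 1] unfolding bounded_iff by blast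
  have "norm c \<le> BQ + 1" if cC: "c \<in> C" for c
  proof -
    obtain p0 where p0: "p0 \<in> P" "c = - p0" using cC unfolding C_def by blast
    have "c \<in> closure US" using cC unfolding C_def S_def by blast
    then obtain u where u: "u \<in> US" "dist u c < 1" unfolding closure_approachable by (meson zero_less_one)
    obtain k where k: "k \<in> K" "norm (u - k) \<le> r + B" using USK[OF u(1)] by blast
    have "norm (u + p0) < 1" using u(2) p0(2) by (simp add: dist_norm)
    then have "u \<in> Q 1" unfolding Q_def using k p0(1) by (auto intro!: less_imp_le)
    then have "norm u \<le> BQ" by (rule BQ)
    moreover have "norm c \<le> norm u + dist u c"
      by (metis dist_commute dist_norm norm_triangle_sub add.commute)
    ultimately show ?thesis using u(2) by linarith
  qed
  then have Cb: "bounded C" unfolding bounded_iff by blast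
  have Ccomp: "compact C" using Ccl Cb by (simp add: compact_eq_bounded_closed)
  obtain fb Lb where fbL: "(fb, Lb) \<in> FL U f L x" "- Lb \<in> DWup T W P (t, x, y) (1, fb)"
    using assms(3,4,5) unfolding gen_contingent_solution_def by blast
  define D where "D = DWup T W P (t, x, y) (1, fb) \<inter> {w. - Lb - w \<in> P}"
  have "DWup T W P (t, x, y) (1, fb) = (\<lambda>w. (1::real, fb, w)) -` contingent (gph_up T W P) (t, x, y)"
    unfolding DWup_def by auto
  then have "closed (DWup T W P (t, x, y) (1, fb))"
    by (simp add: closed_vimage contingent_closed continuous_intros)
  moreover have "{w. - Lb - w \<in> P} = (\<lambda>w. - Lb - w) -` P" by auto
  then have "closed {w. - Lb - w \<in> P}" by (simp add: closed_vimage Pc(1) continuous_intros)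
  ultimately have Dcl: "closed D" unfolding D_def by auto
  have "D \<subseteq> Q (norm Lb)"
  proof
    fix w assume w: "w \<in> D"
    obtain k where k: "k \<in> K" "norm (w - k) \<le> r" using incl1[OF fbL(1)] w unfolding D_def by blast
    have "norm (w - k) \<le> r + B" using k(2) B(1) by linarith
    moreover have "norm (w + (- Lb - w)) \<le> norm Lb" by simp
    ultimately show "w \<in> Q (norm Lb)" unfolding Q_def using k(1) w unfolding D_def by blast
  qed
  then have "bounded D" using Qb bounded_subset by blast
  then have Dcomp: "compact D" using Dcl by (simp add: compact_eq_bounded_closed)
  have "- Lb \<in> D" unfolding D_def using fbL(2) Pc(4) by simp
  then obtain e where e: "e \<in> D" "\<forall>q\<in>P. e - q \<in> D \<longrightarrow> q = 0"
    using minimal_exists[OF assms(2) Dcomp] by blast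
  have "e \<in> Dup T W P (t, x, y) (1, fb)"
    unfolding Dup_def
  proof (rule effI)
    show "e \<in> DWup T W P (t, x, y) (1, fb)" using e(1) unfolding D_def by blast
    show "0 \<in> P" by (rule Pc(4))
    fix q assume q: "q \<in> P" "e - q \<in> DWup T W P (t, x, y) (1, fb)"
    have eqq: "- Lb - (e - q) = (- Lb - e) + q" by simp
    have "- Lb - e \<in> P" using e(1) unfolding D_def by blast
    then have "(- Lb - e) + q \<in> P" using Padd q(1) by blast
    then have "- Lb - (e - q) \<in> P" unfolding eqq .
    then have "e - q \<in> D" using q(2) unfolding D_def by blast
    then show "q = 0" using e(2) q(1) by blast
  qed
  then have "Lb + e \<in> US" unfolding US_def using fbL(1) by blast
  then have "Lb + e \<in> S" unfolding S_def using closure_subset by blast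
  moreover have "Lb + e \<in> uminus ` P"
  proof -
    have "- Lb - e \<in> P" using e(1) unfolding D_def by blast
    then show ?thesis by (rule rev_image_eqI) simp
  qed
  ultimately have "C \<noteq> {}" unfolding C_def by blast
  then obtain m where m: "m \<in> C" "\<forall>q\<in>P. m - q \<in> C \<longrightarrow> q = 0"
    using minimal_exists[OF assms(2) Ccomp] by blast
  obtain p0 where p0: "p0 \<in> P" "m = - p0" using m(1) unfolding C_def by blast
  have "m \<in> eff S P"
  proof (rule effI)
    show "m \<in> S" using m(1) unfolding C_def by blast
    show "0 \<in> P" by (rule Pc(4))
    fix q assume q: "q \<in> P" "m - q \<in> S"
    have "m - q = - (p0 + q)" using p0(2) by simp
    moreover have "p0 + q \<in> P" using Padd p0(1) q(1) by blast
    ultimately have "m - q \<in> uminus ` P" by blast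
    then have "m - q \<in> C" using q(2) unfolding C_def by blast
    then show "q = 0" using m(2) q(1) by blast
  qed
  moreover have "0 = m + p0" using p0(2) by simp
  ultimately have "0 \<in> msum (eff S P) P" unfolding msum_def using p0(1) by blast
  then show ?thesis unfolding S_def US_def .
qed

end
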